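(* $\delta(1)\le 4$; that is, $1\in E_4$: every multiset of four decimal digits can be condensed into $1$.
   Context: For a finite nonempty multiset $S$ of real numbers, $V(S)$ is the smallest set of real numbers such that: (1) if $|S|=1$ then $S\subseteq V(S)$; (2) if $|S|\ge 2$, then for all nonempty multisets $A,B$ with $A+B=S$ (multiplicities add) and all $a\in V(A)$, $b\in V(B)$, each of $a+b,\ a-b,\ b-a,\ ab,\ a/b,\ b/a,\ a^b,\ b^a$ lies in $V(S)$ whenever it is a well-defined real number; (3) if $a\in V(S)$ is a nonnegative integer then $a!\in V(S)$ (with $0!=1$). Let $D=\{0,\dots,9\}$; for $k\ge1$, $E_k$ is the intersection of $V(S)$ over all multisets $S$ of size $k$ with all elements in $D$. For a number $n$, $\delta(n)=\min\{k\ge1: n\in E_k\}$. *)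

theory Defs
  imports Complex_Main "HOL-Library.Multiset"
begin

text \<open>Convention: a > 0 gives a powr b; a = 0 requires b > 0 (value 0); a < 0 requires b to be
  an integer. 0^0 and negative bases with non-integer exponents are treated as undefined.\<close>
definition real_pow_rel :: "real \<Rightarrow> real \<Rightarrow> real \<Rightarrow> bool" where
  "real_pow_rel a b c \<longleftrightarrow>
     (a > 0 \<and> c = a powr b) \<or>
     (a = 0 \<and> b > 0 \<and> c = 0) \<or>
     (a < 0 \<and> b \<in> \<int> \<and> c = a powi \<lfloor>b\<rfloor>)"

definition binop_results :: "real \<Rightarrow> real \<Rightarrow> real set" where
  "binop_results a b =
     {a + b, a - b, b - a, a * b}
     \<union> (if b \<noteq> 0 then {a / b} else {}) \<union> (if a \<noteq> 0 then {b / a} else {})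
     \<union> {c. real_pow_rel a b c} \<union> {c. real_pow_rel b a c}"

inductive V :: "real multiset \<Rightarrow> real \<Rightarrow> bool" where
  single: "V {#x#} x"
| combine: "\<lbrakk>A \<noteq> {#}; B \<noteq> {#}; V A a; V B b; c \<in> binop_results a b\<rbrakk> \<Longrightarrow> V (A + B) c"
| factorial: "\<lbrakk>V S a; a \<in> \<int>; a \<ge> 0\<rbrakk> \<Longrightarrow> V S (fact (nat \<lfloor>a\<rfloor>))"

definition D :: "real set" where
  "D = real ` {0..9}"

definition E :: "nat \<Rightarrow> real set" where
  "E k = {x. \<forall>S. size S = k \<and> set_mset S \<subseteq> D \<longrightarrow> V S x}"

end

theory Submission
  imports Defs
begin

lemma V_nonempty: "V S x \<Longrightarrow> S \<noteq> {#}"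
  by (induction rule: V.induct) auto

lemma comb: "V A a \<Longrightarrow> V B b \<Longrightarrow> c \<in> binop_results a b \<Longrightarrow> V (A + B) c"
  using V.combine V_nonempty by blast

lemma lift1: "V A 1 \<Longrightarrow> V (add_mset z A) 1"
proof -
  assume h: "V A 1"
  have "(1::real) \<in> binop_results 1 z"
    unfolding binop_results_def real_pow_rel_def by auto
  from comb[OF h V.single this] show ?thesis by simp
qed

lemma lift: "V A 1 \<Longrightarrow> V (A + B) 1"
  by (induction B) (auto intro: lift1)

lemma V_fact_nat: "V S (real n) \<Longrightarrow> V S (fact n)"
  using V.factorial[of S "real n"] by simp

lemma one0: "V {#0::real#} 1"
  using V_fact_nat[of "{#0#}" 0] V.single[of 0] by simp

lemma one1: "V {#1::real#} 1"
  using V.single[of 1] by simp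

definition good2 :: "nat \<Rightarrow> nat \<Rightarrow> bool" where
  "good2 x y \<longleftrightarrow> x = y \<or> x \<le> 1 \<or> y \<le> 1 \<or> x = y + 1 \<or> y = x + 1
     \<or> (x = 3 \<and> y = 5) \<or> (x = 5 \<and> y = 3) \<or> (x = 3 \<and> y = 7) \<or> (x = 7 \<and> y = 3)"

lemma pair_swap: assumes "V {#x, y#} c" shows "V {#y, x#} c"
  using assms add_mset_commute[of x y "{#}"] by metis

lemma pair_sub: "V {#x#} a \<Longrightarrow> V {#y#} b \<Longrightarrow> a - b = 1 \<Longrightarrow> V {#x, y#} 1"
proof -
  assume h1: "V {#x#} a" and h2: "V {#y#} b" and e: "a - b = 1"
  have "1 \<in> binop_results a b" using e unfolding binop_results_def by auto
  from comb[OF h1 h2 this] have "V {#y, x#} 1" by simp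
  then show ?thesis by (rule pair_swap)
qed


lemma good2_V: "good2 x y \<Longrightarrow> V {#real x, real y#} 1"
proof -
  assume g: "good2 x y"
  have s: "\<And>x. V {#real x#} (real x)" by (rule V.single)
  have lo: "\<And>x y. x \<le> (1::nat) \<Longrightarrow> V {#real x, real y#} 1"
  proof -
    fix x y :: nat assume "x \<le> 1"
    then have "V {#real x#} 1" using one0 one1 by (cases x) auto
    then have "V (add_mset (real y) {#real x#}) 1" by (rule lift1)
    then show "V {#real x, real y#} 1" by (simp add: add_mset_commute)
  qed
  have eq: "\<And>x. V {#real x, real x#} 1"
  proof -
    fix x :: nat
    show "V {#real x, real x#} 1"
    proof (cases "x = 0")
      case True then show ?thesis using lo[of 0 0] by simp
    next
      case False
      have "1 \<in> binop_results (real x) (real x)" using False unfolding binop_results_def by auto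
      from comb[OF s s this] show ?thesis by simp
    qed
  qed
  have cons: "V {#real (x+1), real x#} 1" for x
    using pair_sub[OF s[of "x+1"] s[of x]] by simp
  have f3: "V {#3::real#} 6"
    using V_fact_nat[of "{#3#}" 3] V.single[of 3] by (simp add: fact_numeral)
  have p35: "V {#3::real, 5#} 1" using pair_sub[OF f3 V.single[of 5]] by simp
  have p37: "V {#3::real, 7#} 1" using pair_swap[OF pair_sub[OF V.single[of 7] f3]] by simp
  from g show ?thesis unfolding good2_def
    apply (elim disjE)
    subgoal using eq[of x] by simp
    subgoal using lo[of x y] by simp
    subgoal using pair_swap[OF lo[of y x]] by simp
    subgoal using cons[of y] by simp
    subgoal using pair_swap[OF cons[of x]] by simp
    subgoal using p35 by simp
    subgoal using pair_swap[OF p35] by simp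
    subgoal using p37 by simp
    subgoal using pair_swap[OF p37] by simp
    done
qed

lemma triple_V: "x + y = z \<Longrightarrow> 0 < z \<Longrightarrow> V {#real x, real y, real z#} 1"
proof -
  assume e: "x + y = z" and z: "0 < z"
  have "real x + real y \<in> binop_results (real x) (real y)" unfolding binop_results_def by auto
  from comb[OF V.single V.single this] have a1: "V {#real y, real x#} (real (x + y))" by simp
  have a0: "V {#real y, real x#} (real z)" using a1 e by simp
  have a: "V {#real x, real y#} (real z)" using pair_swap[OF a0] .
  have "1 \<in> binop_results (real z) (real z)" using z unfolding binop_results_def by auto
  from comb[OF a V.single this] have "V ({#real x, real y#} + {#real z#}) 1" .
  moreover have "{#real x, real y#} + {#real z#} = {#real x, real y, real z#}" by (simp add: add_mset_commute)
  ultimately show ?thesis by metis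
qed

lemma le9: "(n::nat) \<le> 9 \<Longrightarrow> n = 0 \<or> n = 1 \<or> n = 2 \<or> n = 3 \<or> n = 4 \<or> n = 5 \<or> n = 6 \<or> n = 7 \<or> n = 8 \<or> n = 9" by arith

lemma arith_fact:
  fixes a b c d :: nat
  assumes "a \<le> b" "b \<le> c" "c \<le> d" "d \<le> 9"
  shows "good2 a b \<or> good2 a c \<or> good2 a d \<or> good2 b c \<or> good2 b d \<or> good2 c d
    \<or> (a + b = c \<and> 0 < c) \<or> (a + b = d \<and> 0 < d) \<or> (a + c = d \<and> 0 < d) \<or> (b + c = d \<and> 0 < d)"
proof -
  have "a \<le> 9" "b \<le> 9" "c \<le> 9" using assms by auto
  then show ?thesis using assms unfolding good2_def
  by (insert le9[OF \<open>a\<le>9\<close>], elim disjE; simp; insert le9[OF \<open>b\<le>9\<close>], elim disjE; simp;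
      insert le9[OF \<open>c\<le>9\<close>], elim disjE; simp; insert le9[OF assms(4)], elim disjE; simp)
qed

lemma lift_sub: assumes "V A 1" "A \<subseteq># S" shows "V S 1"
proof -
  have "S = A + (S - A)" using assms(2) by simp
  then show ?thesis using lift[OF assms(1), of "S - A"] by simp
qed

lemma main4:
  fixes a b c d :: nat
  assumes "a \<le> b" "b \<le> c" "c \<le> d" "d \<le> 9"
  shows "V {#real a, real b, real c, real d#} 1"
proof -
  let ?S = "{#real a, real b, real c, real d#}"
  have p: "V ?S 1" if "good2 x y" "{#real x, real y#} \<subseteq># ?S" for x y
    using lift_sub[OF good2_V[OF that(1)] that(2)] .
  have t: "V ?S 1" if "x + y = z" "0 < z" "{#real x, real y, real z#} \<subseteq># ?S" for x y z
    using lift_sub[OF triple_V[OF that(1,2)] that(3)] .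
  from arith_fact[OF assms] show ?thesis
    apply (elim disjE)
    subgoal using p[of a b] by simp
    subgoal using p[of a c] by simp
    subgoal using p[of a d] by simp
    subgoal using p[of b c] by simp
    subgoal using p[of b d] by simp
    subgoal using p[of c d] by simp
    subgoal using t[of a b c] by simp
    subgoal using t[of a b d] by simp
    subgoal using t[of a c d] by simp
    subgoal using t[of b c d] by simp
    done
qed

lemma inD: "u \<in> D \<Longrightarrow> \<exists>k::nat. u = real k \<and> k \<le> 9"
  unfolding D_def by auto

theorem lemma5p1:
  shows "(1::real) \<in> E 4"
  unfolding E_def
proof (intro CollectI allI impI)
  fix S :: "real multiset"
  assume h: "size S = 4 \<and> set_mset S \<subseteq> D"
  define xs where "xs = sorted_list_of_multiset S"
  have m: "mset xs = S" by (simp add: xs_def)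
  have so: "sorted xs" by (simp add: xs_def)
  have l: "length xs = 4" using h m by (metis size_mset)
  have "\<exists>w x y z. xs = [w, x, y, z]" using l by (simp add: length_Suc_conv numeral_eq_Suc) blast
  then obtain w x y z where xs: "xs = [w, x, y, z]" by blast
  have sD: "set xs \<subseteq> D" using h m by (metis set_mset_mset)
  obtain a where a: "w = real a" "a \<le> 9" using inD sD xs by force
  obtain b where b: "x = real b" "b \<le> 9" using inD sD xs by force
  obtain c where c: "y = real c" "c \<le> 9" using inD sD xs by force
  obtain d where d: "z = real d" "d \<le> 9" using inD sD xs by force
  have o: "w \<le> x" "x \<le> y" "y \<le> z" using so xs by auto
  have "a \<le> b" "b \<le> c" "c \<le> d" using o a b c d by auto
  from main4[OF this d(2)] have "V {#w, x, y, z#} 1" using a b c d by simp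
  moreover have "S = {#w, x, y, z#}" using m xs by simp
  ultimately show "V S 1" by simp
qed

end
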